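(* Let $\mathcal{M}$ be the set of compactly supported probability distributions on $\mathbb{R}$ and $T:\mathcal{M}\to\mathcal{M}$. (i) $T\circ T^u=T^u\circ T$ for every increasing left-continuous $u:\mathbb{R}\to\mathbb{R}$ if and only if $T=T_d$ for some right-continuous distortion function $d$. (ii) $T\circ T_d=T_d\circ T$ for every right-continuous distortion function $d$ if and only if $T=T^u$ for some increasing left-continuous $u:\mathbb{R}\to\mathbb{R}$.
   Context: Increasing means non-decreasing. A distortion function is an increasing function $d:[0,1]\to[0,1]$ with $d(0)=0$, $d(1)=1$. $T_d(F)(x)=\lim_{y\downarrow x}d(F(y))$ for $x\in\mathbb{R}$. For increasing $u$, $T^u(F)=F\circ u^{-1}$ is the distribution of $u(X)$ when $X\sim F$. *)

theory Defs
  imports "HOL-Probability.Probability"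
begin

definition cs_dists :: "real measure set" where
  "cs_dists = {M. real_distribution M \<and> (\<exists>a b. measure M {a..b} = 1)}"

definition distortion :: "(real \<Rightarrow> real) \<Rightarrow> bool" where
  "distortion d \<longleftrightarrow> mono_on {0..1} d \<and> d ` {0..1} \<subseteq> {0..1} \<and> d 0 = 0 \<and> d 1 = 1"

definition rc_distortion :: "(real \<Rightarrow> real) \<Rightarrow> bool" where
  "rc_distortion d \<longleftrightarrow> distortion d \<and> (\<forall>x\<in>{0..<1}. continuous (at_right x) d)"

definition Td :: "(real \<Rightarrow> real) \<Rightarrow> real measure \<Rightarrow> real measure" where
  "Td d M = interval_measure (\<lambda>x. Lim (at_right x) (\<lambda>y. d (cdf M y)))"

definition Tu :: "(real \<Rightarrow> real) \<Rightarrow> real measure \<Rightarrow> real measure" where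
  "Tu u M = distr M borel u"

definition incr_left_cont :: "(real \<Rightarrow> real) \<Rightarrow> bool" where
  "incr_left_cont u \<longleftrightarrow> mono u \<and> (\<forall>x. continuous (at_left x) u)"

end

theory Submission
  imports Defs
begin


lemma cs_char:
  "M \<in> cs_dists \<longleftrightarrow> real_distribution M \<and> (\<exists>a b. cdf M a = 0 \<and> cdf M b = 1)"
proof
  assume "M \<in> cs_dists"
  then obtain a b where rd: "real_distribution M" and ab: "measure M {a..b} = 1"
    unfolding cs_dists_def by auto
  interpret real_distribution M by fact
  have "measure M ({..a-1} \<union> {a..b}) = measure M {..a-1} + measure M {a..b}"
    by (intro finite_measure_Union) auto
  moreover have "measure M ({..a-1} \<union> {a..b}) \<le> 1" by simp
  ultimately have "cdf M (a-1) = 0" using ab cdf_nonneg[of "a-1"] unfolding cdf_def2 by simp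
  moreover have "measure M {a..b} \<le> cdf M b" unfolding cdf_def2
    by (intro finite_measure_mono) auto
  then have "cdf M b = 1" using ab cdf_bounded_prob[of b] by simp
  ultimately show "real_distribution M \<and> (\<exists>a b. cdf M a = 0 \<and> cdf M b = 1)" using rd by blast
next
  assume "real_distribution M \<and> (\<exists>a b. cdf M a = 0 \<and> cdf M b = 1)"
  then obtain a b where rd: "real_distribution M" and ab: "cdf M a = 0" "cdf M b = 1" by blast
  interpret real_distribution M by fact
  have "a \<le> b" using ab cdf_nondecreasing[of b a] by (cases "a \<le> b") auto
  have "{a<..b} = {..b} - {..a}" by auto
  then have "measure M {a<..b} = 1"
    using ab \<open>a \<le> b\<close> by (simp add: finite_measure_Diff cdf_def2)
  moreover have "measure M {a<..b} \<le> measure M {a..b}" by (intro finite_measure_mono) auto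
  ultimately have "measure M {a..b} = 1" using prob_le_1[of "{a..b}"] by simp
  then show "M \<in> cs_dists" unfolding cs_dists_def using rd by blast
qed

lemma interval_cs:
  fixes F :: "real \<Rightarrow> real"
  assumes mono: "\<And>x y. x \<le> y \<Longrightarrow> F x \<le> F y" and rc: "\<And>x. continuous (at_right x) F"
    and nn: "\<And>x. 0 \<le> F x" and ab: "F a = 0" "F b = 1" and le1: "\<And>x. F x \<le> 1"
  shows "interval_measure F \<in> cs_dists" "cdf (interval_measure F) = F"
proof -
  have bot: "(F \<longlongrightarrow> 0) at_bot"
    by (rule tendsto_eventually) (auto simp: eventually_at_bot_linorder intro!: exI[of _ a]
        intro: antisym nn dest: mono[of _ a] simp: ab; metis antisym mono nn ab(1))
  have top: "(F \<longlongrightarrow> 1) at_top"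
    by (rule tendsto_eventually) (auto simp: eventually_at_top_linorder intro!: exI[of _ b]
        intro: antisym le1 dest: mono[of b] simp: ab; metis antisym mono le1 ab(2))
  show c: "cdf (interval_measure F) = F"
    by (rule cdf_interval_measure[OF mono rc bot])
  have "real_distribution (interval_measure F)"
    by (rule real_distribution_interval_measure[OF mono rc bot top])
  then show "interval_measure F \<in> cs_dists" using ab c cs_char by auto
qed


lemma rcd_props:
  assumes "rc_distortion d"
  shows "\<And>s t. 0 \<le> s \<Longrightarrow> s \<le> t \<Longrightarrow> t \<le> 1 \<Longrightarrow> d s \<le> d t"
    and "\<And>t. 0 \<le> t \<Longrightarrow> t \<le> 1 \<Longrightarrow> 0 \<le> d t \<and> d t \<le> 1"
    and "d 0 = 0" "d 1 = 1"
    and "\<And>t. 0 \<le> t \<Longrightarrow> t < 1 \<Longrightarrow> (d \<longlongrightarrow> d t) (at_right t)"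
  using assms unfolding rc_distortion_def distortion_def mono_on_def
  by (auto simp: continuous_within image_subset_iff)

lemma comp_rc:
  assumes d: "rc_distortion d" and rd: "real_distribution M"
  shows "((\<lambda>y. d (cdf M y)) \<longlongrightarrow> d (cdf M x)) (at_right x)"
proof -
  interpret real_distribution M by fact
  let ?p = "cdf M x"
  have p01: "0 \<le> ?p" "?p \<le> 1" using cdf_nonneg cdf_bounded_prob by auto
  have Fge: "eventually (\<lambda>y. ?p \<le> cdf M y) (at_right x)"
    by (auto simp: eventually_at_right_field intro!: exI[of _ "x+1"] cdf_nondecreasing)
  show ?thesis
  proof (cases "?p = 1")
    case True
    have "eventually (\<lambda>y. d (cdf M y) = d ?p) (at_right x)"
      using Fge by eventually_elim (metis True antisym cdf_bounded_prob)
    then show ?thesis by (rule tendsto_eventually[THEN filterlim_cong[THEN iffD1, rotated 3]]) (auto elim: eventually_mono)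
  next
    case False
    then have p1: "?p < 1" using p01 by simp
    show ?thesis
    proof (rule order_tendstoI)
      fix z assume "z < d ?p"
      show "eventually (\<lambda>y. z < d (cdf M y)) (at_right x)"
        using Fge by eventually_elim
          (use \<open>z < d ?p\<close> rcd_props(1)[OF d] p01 cdf_bounded_prob in \<open>fastforce\<close>)
    next
      fix z assume "d ?p < z"
      from order_tendstoD(2)[OF rcd_props(5)[OF d p01(1) p1] this]
      obtain b where b: "b > ?p" "\<And>t. ?p < t \<Longrightarrow> t < b \<Longrightarrow> d t < z"
        unfolding eventually_at_right_field by blast
      have "(cdf M \<longlongrightarrow> ?p) (at_right x)"
        using cdf_is_right_cont[of x] by (simp add: continuous_within)
      from order_tendstoD(2)[OF this b(1)]
      have "eventually (\<lambda>y. cdf M y < b) (at_right x)" .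
      then show "eventually (\<lambda>y. d (cdf M y) < z) (at_right x)"
        using Fge by eventually_elim (use b \<open>d ?p < z\<close> in \<open>fastforce simp: order.order_iff_strict\<close>)
    qed
  qed
qed

lemma Td_props:
  assumes d: "rc_distortion d" and M: "M \<in> cs_dists"
  shows "Td d M \<in> cs_dists" "cdf (Td d M) = (\<lambda>x. d (cdf M x))"
proof -
  have rd: "real_distribution M" using M cs_char by auto
  interpret real_distribution M by fact
  obtain a b where ab: "cdf M a = 0" "cdf M b = 1" using M cs_char by auto
  have eq: "Td d M = interval_measure (\<lambda>x. d (cdf M x))"
    unfolding Td_def
    by (rule arg_cong[where f=interval_measure], rule ext, rule tendsto_Lim)
       (auto intro: comp_rc[OF d rd])
  have F01: "0 \<le> cdf M x" "cdf M x \<le> 1" for x using cdf_nonneg cdf_bounded_prob by auto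
  have *: "interval_measure (\<lambda>x. d (cdf M x)) \<in> cs_dists \<and> cdf (interval_measure (\<lambda>x. d (cdf M x))) = (\<lambda>x. d (cdf M x))"
  proof -
    have m: "d (cdf M x) \<le> d (cdf M y)" if "x \<le> y" for x y
      using rcd_props(1)[OF d] F01 cdf_nondecreasing[OF that] by blast
    have rc: "continuous (at_right x) (\<lambda>x. d (cdf M x))" for x
      by (simp add: continuous_within comp_rc[OF d rd])
    show ?thesis
      using interval_cs[of "\<lambda>x. d (cdf M x)" a b, OF m rc] rcd_props(2-4)[OF d] F01 ab by auto
  qed
  then show "Td d M \<in> cs_dists" "cdf (Td d M) = (\<lambda>x. d (cdf M x))" using eq by auto
qed

lemma Tu_props:
  assumes u: "incr_left_cont u" and M: "M \<in> cs_dists"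
  shows "Tu u M \<in> cs_dists" "\<And>x. cdf (Tu u M) x = measure M {y. u y \<le> x}"
proof -
  have rd: "real_distribution M" using M cs_char by auto
  interpret real_distribution M by fact
  have mono: "mono u" using u unfolding incr_left_cont_def by auto
  have meas: "u \<in> borel_measurable M" using borel_measurable_mono[OF mono] by simp
  have setsU: "{y. u y \<le> c} \<in> sets M" for c
    using measurable_sets[OF meas atMost_borel[of c]] by (simp add: vimage_def)
  have rd2: "real_distribution (Tu u M)" unfolding Tu_def using meas by simp
  show c: "cdf (Tu u M) x = measure M {y. u y \<le> x}" for x
    unfolding Tu_def cdf_def2 using meas by (subst measure_distr) (auto simp: vimage_def)
  obtain a b where ab: "cdf M a = 0" "cdf M b = 1" using M cs_char by auto
  have "measure M {y. u y \<le> u a - 1} \<le> measure M {..a}"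
  proof (intro finite_measure_mono subsetI)
    fix y assume "y \<in> {y. u y \<le> u a - 1}"
    then have "u y < u a" by simp
    then have "y < a" using mono by (metis monoD not_le)
    then show "y \<in> {..a}" by simp
  qed (use setsU in auto)
  then have "cdf (Tu u M) (u a - 1) = 0" using c ab by (simp add: cdf_def2 antisym)
  moreover have "measure M {..b} \<le> measure M {y. u y \<le> u b}"
    using mono setsU by (intro finite_measure_mono) (auto simp: mono_def)
  then have "cdf (Tu u M) (u b) = 1" using c ab prob_le_1 by (simp add: cdf_def2 antisym)
  ultimately show "Tu u M \<in> cs_dists" using rd2 cs_char by blast
qed


lemma sform:
  assumes u: "incr_left_cont u"
  shows "{y. u y \<le> x} = {} \<or> {y. u y \<le> x} = UNIV \<or> (\<exists>a. {y. u y \<le> x} = {..a})"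
proof -
  let ?S = "{y. u y \<le> x}"
  have mono: "mono u" and lc: "\<And>a. (u \<longlongrightarrow> u a) (at_left a)"
    using u unfolding incr_left_cont_def by (auto simp: continuous_within)
  { assume ne: "?S \<noteq> {}" and nu: "?S \<noteq> UNIV"
    obtain z where z: "z \<notin> ?S" using nu by auto
    have bd: "y < z" if "y \<in> ?S" for y
      using that z mono by (metis mem_Collect_eq monoD not_le order_trans)
    have bdd: "bdd_above ?S" using bd by (metis bdd_aboveI less_imp_le)
    define a where "a = Sup ?S"
    have lt: "u y \<le> x" if "y < a" for y
    proof -
      obtain t where "t \<in> ?S" "y < t" using less_cSup_iff[OF ne bdd] \<open>y < a\<close> a_def by auto
      then show ?thesis using mono by (metis mem_Collect_eq monoD less_imp_le order_trans)
    qed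
    have "u a \<le> x"
      by (rule tendsto_upperbound[OF lc[of a]])
         (auto simp: eventually_at_left_field intro!: exI[of _ "a - 1"] lt)
    then have "?S = {..a}"
      using cSup_upper[OF _ bdd] mono a_def by (auto dest: monoD intro: order_trans)
    then have "\<exists>a. ?S = {..a}" by blast }
  then show ?thesis by blast
qed

lemma comm:
  assumes d: "rc_distortion d" and u: "incr_left_cont u" and M: "M \<in> cs_dists"
  shows "Td d (Tu u M) = Tu u (Td d M)"
proof -
  have c1: "Tu u M \<in> cs_dists" "Td d M \<in> cs_dists" using Td_props Tu_props d u M by auto
  have c2: "Td d (Tu u M) \<in> cs_dists" "Tu u (Td d M) \<in> cs_dists" using Td_props Tu_props d u c1 by auto
  have rd: "real_distribution M" "real_distribution (Td d M)" using M c1 cs_char by auto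
  show ?thesis
  proof (rule cdf_unique)
    show "real_distribution (Td d (Tu u M))" "real_distribution (Tu u (Td d M))"
      using c2 cs_char by auto
    show "cdf (Td d (Tu u M)) = cdf (Tu u (Td d M))"
    proof
      fix x
      have "cdf (Td d (Tu u M)) x = d (measure M {y. u y \<le> x})"
        using Td_props(2)[OF d c1(1)] Tu_props(2)[OF u M] by simp
      moreover have "cdf (Tu u (Td d M)) x = measure (Td d M) {y. u y \<le> x}"
        using Tu_props(2)[OF u c1(2)] by simp
      moreover have "d (measure M {y. u y \<le> x}) = measure (Td d M) {y. u y \<le> x}"
        using sform[OF u, of x]
      proof (elim disjE exE)
        assume "{y. u y \<le> x} = {}" then show ?thesis using rcd_props(3)[OF d] by simp
      next
        assume "{y. u y \<le> x} = UNIV" then show ?thesis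
          using rcd_props(4)[OF d] rd prob_space.prob_space[of M] prob_space.prob_space[of "Td d M"]
            real_distribution.space_eq_univ[of M] real_distribution.space_eq_univ[of "Td d M"]
          by (simp add: real_distribution_def)
      next
        fix a assume "{y. u y \<le> x} = {..a}" then show ?thesis
          using Td_props(2)[OF d M] by (simp add: cdf_def2[symmetric])
      qed
      ultimately show "cdf (Td d (Tu u M)) x = cdf (Tu u (Td d M)) x" by simp
    qed
  qed
qed

definition quantile :: "real measure \<Rightarrow> real \<Rightarrow> real" where
  "quantile N p = Inf {x. p \<le> cdf N x}"

lemma Q1:
  assumes N: "N \<in> cs_dists" and p: "0 < p" "p \<le> 1"
  shows "quantile N p \<le> x \<longleftrightarrow> p \<le> cdf N x"
proof -
  interpret real_distribution N using N cs_char by auto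
  obtain a b where ab: "cdf N a = 0" "cdf N b = 1" using N cs_char by auto
  let ?A = "{x. p \<le> cdf N x}"
  have ne: "?A \<noteq> {}" using ab p by (auto intro!: exI[of _ b])
  have bdd: "bdd_below ?A"
  proof (rule bdd_belowI[of _ a])
    fix x assume "x \<in> ?A"
    then show "a \<le> x" using ab p cdf_nondecreasing[of x a] by (cases "a \<le> x") auto
  qed
  have inA: "p \<le> cdf N (Inf ?A)"
  proof (rule tendsto_lowerbound)
    show "(cdf N \<longlongrightarrow> cdf N (Inf ?A)) (at_right (Inf ?A))"
      using cdf_is_right_cont by (simp add: continuous_within)
    show "\<forall>\<^sub>F y in at_right (Inf ?A). p \<le> cdf N y"
      unfolding eventually_at_right_field
    proof (intro exI[of _ "Inf ?A + 1"] conjI allI impI)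
      fix y assume "Inf ?A < y"
      then obtain t where "t \<in> ?A" "t < y" using cInf_less_iff[OF ne bdd] by auto
      then show "p \<le> cdf N y" using cdf_nondecreasing[of t y] by auto
    qed simp
  qed simp
  show ?thesis unfolding quantile_def
    using inA cdf_nondecreasing cInf_lower[OF _ bdd] by (auto intro: order_trans)
qed

lemma Qmono:
  assumes N: "N \<in> cs_dists" and p: "0 < p" "p \<le> p'" "p' \<le> 1"
  shows "quantile N p \<le> quantile N p'"
  using Q1[OF N, of p] Q1[OF N, of p' "quantile N p'"] p by auto

lemma Qlc:
  assumes N: "N \<in> cs_dists" and p: "0 < p" "p \<le> 1"
  shows "(quantile N \<longlongrightarrow> quantile N p) (at_left p)"
proof (rule order_tendstoI)
  interpret real_distribution N using N cs_char by auto
  fix z assume "z < quantile N p"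
  then have Fz: "cdf N z < p" using Q1[OF N p, of z] by auto
  define w where "w = (cdf N z + p) / 2"
  have w: "w < p" "cdf N z < w" "0 < w" using Fz cdf_nonneg[of z] w_def by auto
  show "\<forall>\<^sub>F y in at_left p. z < quantile N y"
    unfolding eventually_at_left_field
  proof (intro exI[of _ w] conjI allI impI)
    fix y assume "w < y" "y < p"
    then show "z < quantile N y" using Q1[OF N, of y z] w p by auto
  qed (use w in auto)
next
  fix z assume "quantile N p < z"
  show "\<forall>\<^sub>F y in at_left p. quantile N y < z"
    unfolding eventually_at_left_field
  proof (intro exI[of _ 0] conjI allI impI)
    fix y assume "0 < y" "y < p"
    then show "quantile N y < z" using Qmono[OF N, of y p] p \<open>quantile N p < z\<close> by auto
  qed (use p in auto)
qed


definition uni :: "real \<Rightarrow> real \<Rightarrow> real measure" where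
  "uni a b = interval_measure (\<lambda>x. max 0 (min 1 ((x-a)/(b-a))))"

lemma uni:
  assumes "a < b"
  shows "uni a b \<in> cs_dists" "cdf (uni a b) = (\<lambda>x. max 0 (min 1 ((x-a)/(b-a))))"
proof -
  have m: "max 0 (min 1 ((x-a)/(b-a))) \<le> max 0 (min 1 ((y-a)/(b-a)))" if "x \<le> y" for x y
  proof -
    have "(x-a)/(b-a) \<le> (y-a)/(b-a)" using that assms by (intro divide_right_mono) auto
    then show ?thesis by (auto simp: max_def min_def)
  qed
  have rc: "continuous (at_right x) (\<lambda>x. max 0 (min 1 ((x-a)/(b-a))))" for x
    by (simp add: continuous_within) (intro tendsto_intros, use assms in auto)
  show "uni a b \<in> cs_dists" "cdf (uni a b) = (\<lambda>x. max 0 (min 1 ((x-a)/(b-a))))"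
    unfolding uni_def using interval_cs[of "\<lambda>x. max 0 (min 1 ((x-a)/(b-a)))" a b, OF m rc] assms
    by auto
qed

lemma quni:
  assumes "a < b" "0 < p" "p \<le> 1"
  shows "quantile (uni a b) p = a + p * (b - a)"
proof -
  have eq: "quantile (uni a b) p \<le> x \<longleftrightarrow> a + p * (b - a) \<le> x" for x
  proof -
    have "quantile (uni a b) p \<le> x \<longleftrightarrow> p \<le> max 0 (min 1 ((x-a)/(b-a)))"
      using Q1[OF uni(1)[OF assms(1)] assms(2,3)] uni(2)[OF assms(1)] by simp
    also have "\<dots> \<longleftrightarrow> p \<le> (x-a)/(b-a)" using assms by auto
    also have "\<dots> \<longleftrightarrow> a + p * (b - a) \<le> x" using assms by (simp add: pos_le_divide_eq algebra_simps)
    finally show ?thesis .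
  qed
  show ?thesis using eq[of "a + p * (b - a)"] eq[of "quantile (uni a b) p"] by linarith
qed

lemma meas01:
  assumes N: "real_distribution N" and c: "cdf N 0 = 0" "cdf N 1 = 1"
    and S: "S \<in> sets borel" and St: "S \<inter> {0<..1} = {0<..t}" and t: "0 \<le> t" "t \<le> 1"
  shows "measure N S = cdf N t"
proof -
  interpret real_distribution N by fact
  have "{0<..1::real} = {..1} - {..0}" by auto
  then have p1: "prob {0<..1::real} = 1" using c by (simp add: finite_measure_Diff cdf_def2)
  have ae: "AE x in N. x \<in> {0<..1::real}"
    using AE_in_set_eq_1[of "{0<..1}"] p1 by simp
  have "measure N S = measure N (S \<inter> {0<..1})"
  proof -
    have "AE x in N. x \<in> S \<longleftrightarrow> x \<in> S \<inter> {0<..1}" using ae by eventually_elim auto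
    then show ?thesis by (rule finite_measure_eq_AE) (use S in auto)
  qed
  also have "\<dots> = measure N ({..t} - {..0})" proof -
    have "{0<..t} = {..t} - {..0::real}" by auto
    then show ?thesis using St by simp
  qed
  also have "\<dots> = cdf N t" using c t by (simp add: finite_measure_Diff cdf_def2)
  finally show ?thesis .
qed


lemma U01: "uni 0 1 \<in> cs_dists" "cdf (uni 0 1) x = max 0 (min 1 x)"
  using uni[of 0 1] by auto

lemma measU: "real_distribution N \<Longrightarrow> S = {} \<Longrightarrow> measure N S = 0"
  "real_distribution N \<Longrightarrow> S = UNIV \<Longrightarrow> measure N S = 1"
  "real_distribution N \<Longrightarrow> S = {..a} \<Longrightarrow> measure N S = cdf N a"
  using prob_space.prob_space[of N] real_distribution.space_eq_univ[of N]
  by (auto simp: real_distribution_def cdf_def2)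

lemma dir_i:
  assumes T_maps: "\<forall>M\<in>cs_dists. T M \<in> cs_dists"
    and H: "\<forall>u. incr_left_cont u \<longrightarrow> (\<forall>M\<in>cs_dists. T (Tu u M) = Tu u (T M))"
  shows "\<exists>d. rc_distortion d \<and> (\<forall>M\<in>cs_dists. T M = Td d M)"
proof -
  define U where "U = uni 0 1"
  have U: "U \<in> cs_dists" "\<And>x. cdf U x = max 0 (min 1 x)" using U01 U_def by auto
  have rdU: "real_distribution U" using U cs_char by auto
  define N where "N = T U"
  have N: "N \<in> cs_dists" using T_maps U N_def by auto
  have rdN: "real_distribution N" using N cs_char by auto
  define u1 where "u1 = (\<lambda>x::real. max 0 (min 1 x))"
  have u1: "incr_left_cont u1"
    unfolding incr_left_cont_def u1_def mono_def
    by (auto simp: continuous_within intro!: tendsto_intros)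
  have "Tu u1 U = U"
  proof (rule cdf_unique)
    show "real_distribution (Tu u1 U)" using Tu_props(1)[OF u1 U(1)] cs_char by auto
    show "real_distribution U" by fact
    show "cdf (Tu u1 U) = cdf U"
    proof
      fix x
      have "measure U {y. u1 y \<le> x} = max 0 (min 1 x)"
      proof (cases "x < 0")
        case True then have "{y. u1 y \<le> x} = {}" by (auto simp: u1_def)
        then show ?thesis using measU(1)[OF rdU] True by simp
      next
        case False
        show ?thesis
        proof (cases "x \<ge> 1")
          case True then have "{y. u1 y \<le> x} = UNIV" by (auto simp: u1_def)
          then show ?thesis using measU(2)[OF rdU] True by simp
        next
          case False2: False
          then have "{y. u1 y \<le> x} = {..x}" using False by (auto simp: u1_def)
          then show ?thesis using measU(3)[OF rdU] U(2) by simp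
        qed
      qed
      then show "cdf (Tu u1 U) x = cdf U x" using Tu_props(2)[OF u1 U(1)] U(2) by simp
    qed
  qed
  then have N1: "N = Tu u1 N" using H u1 U N_def by metis
  define u2 where "u2 = (\<lambda>x::real. if x \<le> 0 then -1 else x)"
  have u2: "incr_left_cont u2"
    unfolding incr_left_cont_def
  proof
    show "mono u2" by (auto simp: u2_def mono_def)
    show "\<forall>x. continuous (at_left x) u2"
    proof
      fix x :: real
      show "continuous (at_left x) u2"
      proof (cases "x \<le> 0")
        case True
        have "eventually (\<lambda>y. u2 y = u2 x) (at_left x)"
          using True by (auto simp: eventually_at_left_field u2_def intro!: exI[of _ "x - 1"])
        then show ?thesis unfolding continuous_within
          by (rule tendsto_eventually[THEN filterlim_cong[THEN iffD1, rotated 3]]) (auto elim: eventually_mono)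
      next
        case False
        have ev: "eventually (\<lambda>y. y = u2 y) (at_left x)"
          using False by (auto simp: eventually_at_left_field u2_def intro!: exI[of _ 0])
        have lim: "((\<lambda>y. y) \<longlongrightarrow> u2 x) (at_left x)"
          using False by (simp add: u2_def tendsto_ident_at)
        show ?thesis unfolding continuous_within
          by (rule iffD1[OF tendsto_cong[OF ev] lim])
      qed
    qed
  qed
  have "Tu u2 U = U"
  proof (rule cdf_unique)
    show "real_distribution (Tu u2 U)" using Tu_props(1)[OF u2 U(1)] cs_char by auto
    show "real_distribution U" by fact
    show "cdf (Tu u2 U) = cdf U"
    proof
      fix x
      have "measure U {y. u2 y \<le> x} = max 0 (min 1 x)"
      proof (cases "x < -1")
        case True then have "{y. u2 y \<le> x} = {}" by (auto simp: u2_def)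
        then show ?thesis using measU(1)[OF rdU] True by simp
      next
        case False
        show ?thesis
        proof (cases "x < 0")
          case True then have "{y. u2 y \<le> x} = {..0}" using False by (auto simp: u2_def)
          then show ?thesis using measU(3)[OF rdU] True U(2) by simp
        next
          case False2: False
          then have "{y. u2 y \<le> x} = {..x}" using False by (auto simp: u2_def)
          then show ?thesis using measU(3)[OF rdU] U(2) by simp
        qed
      qed
      then show "cdf (Tu u2 U) x = cdf U x" using Tu_props(2)[OF u2 U(1)] U(2) by simp
    qed
  qed
  then have N2: "N = Tu u2 N" using H u2 U N_def by metis
  define d where "d = cdf N"
  have "cdf N 1 = measure N {y. u1 y \<le> 1}" using N1 Tu_props(2)[OF u1 N] by metis
  also have "{y. u1 y \<le> 1} = UNIV" by (auto simp: u1_def)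
  finally have d1: "d 1 = 1" using measU(2)[OF rdN] d_def by simp
  have "cdf N (-1/2) = measure N {y. u1 y \<le> -1/2}" using N1 Tu_props(2)[OF u1 N] by metis
  also have "{y. u1 y \<le> -1/2} = {}" by (auto simp: u1_def)
  finally have m1: "cdf N (-1/2) = 0" using measU(1)[OF rdN] by simp
  have "cdf N (-1/2) = measure N {y. u2 y \<le> -1/2}" using N2 Tu_props(2)[OF u2 N] by metis
  also have "{y. u2 y \<le> -1/2} = {..0}" by (auto simp: u2_def)
  finally have d0: "d 0 = 0" using measU(3)[OF rdN] m1 d_def by simp
  have fbN: "finite_borel_measure N" using real_distribution.finite_borel_measure_M[OF rdN] .
  have d: "rc_distortion d"
    unfolding rc_distortion_def distortion_def d_def mono_on_def
    using d0 d1 finite_borel_measure.cdf_nondecreasing[OF fbN] finite_borel_measure.cdf_nonneg[OF fbN]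
      real_distribution.cdf_bounded_prob[OF rdN] finite_borel_measure.cdf_is_right_cont[OF fbN] d_def
    by auto
  show ?thesis
  proof (intro exI[of _ d] conjI ballI d)
    fix M assume M: "M \<in> cs_dists"
    have rdM: "real_distribution M" using M cs_char by auto
    interpret real_distribution M by fact
    obtain a b where ab: "cdf M a = 0" "cdf M b = 1" using M cs_char by auto
    define q where "q = (\<lambda>v. if v \<le> 0 then a else quantile M (min v 1))"
    have aq: "a \<le> quantile M p" if "0 < p" "p \<le> 1" for p
    proof (rule ccontr)
      assume "\<not> a \<le> quantile M p"
      then have "cdf M (quantile M p) \<le> cdf M a" by (intro cdf_nondecreasing) auto
      then show False using Q1[OF M that, of "quantile M p"] ab that by auto
    qed
    have gal: "q v \<le> x \<longleftrightarrow> v \<le> cdf M x" if "0 < v" "v \<le> 1" for v x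
      using Q1[OF M that] that by (simp add: q_def)
    have q: "incr_left_cont q"
      unfolding incr_left_cont_def
    proof
      show "mono q"
      proof (rule monoI)
        fix v w :: real assume "v \<le> w"
        then show "q v \<le> q w" unfolding q_def
          using aq[of "min w 1"] Qmono[OF M, of "min v 1" "min w 1"] by auto
      qed
      show "\<forall>x. continuous (at_left x) q"
      proof
        fix v :: real
        show "continuous (at_left v) q" unfolding continuous_within
        proof (cases "v \<le> 0")
          case True
          have "eventually (\<lambda>y. q y = q v) (at_left v)"
            using True by (auto simp: eventually_at_left_field q_def intro!: exI[of _ "v - 1"])
          then show "(q \<longlongrightarrow> q v) (at_left v)"
            by (rule tendsto_eventually[THEN filterlim_cong[THEN iffD1, rotated 3]]) (auto elim: eventually_mono)
        next
          case False
          show "(q \<longlongrightarrow> q v) (at_left v)"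
          proof (cases "v \<le> 1")
            case True
            have ev: "eventually (\<lambda>y. quantile M y = q y) (at_left v)"
              using False True by (auto simp: eventually_at_left_field q_def intro!: exI[of _ 0])
            have lim: "(quantile M \<longlongrightarrow> q v) (at_left v)"
              using Qlc[OF M, of v] False True by (simp add: q_def)
            show ?thesis
              by (rule iffD1[OF tendsto_cong[OF ev] lim])
          next
            case False2: False
            have "eventually (\<lambda>y. q y = q v) (at_left v)"
              using False2 by (auto simp: eventually_at_left_field q_def intro!: exI[of _ 1])
            then show "(q \<longlongrightarrow> q v) (at_left v)"
              by (rule tendsto_eventually[THEN filterlim_cong[THEN iffD1, rotated 3]]) (auto elim: eventually_mono)
          qed
        qed
      qed
    qed
    have qmeas: "{v. q v \<le> x} \<in> sets borel" for x
      using measurable_sets[OF borel_measurable_mono[of q] atMost_borel[of x]] q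
      by (simp add: vimage_def incr_left_cont_def)
    have qset: "{v. q v \<le> x} \<inter> {0<..1} = {0<..cdf M x}" for x
      using gal[of _ x] cdf_bounded_prob[of x] by auto
    have U01': "cdf U 0 = 0" "cdf U 1 = 1" using U(2) by auto
    have N01': "cdf N 0 = 0" "cdf N 1 = 1" using d0 d1 d_def by auto
    have "Tu q U = M"
    proof (rule cdf_unique)
      show "real_distribution (Tu q U)" using Tu_props(1)[OF q U(1)] cs_char by auto
      show "real_distribution M" by fact
      show "cdf (Tu q U) = cdf M"
      proof
        fix x
        have "measure U {v. q v \<le> x} = cdf U (cdf M x)"
          by (rule meas01[OF rdU U01' qmeas qset]) (use cdf_nonneg cdf_bounded_prob in auto)
        then show "cdf (Tu q U) x = cdf M x"
          using Tu_props(2)[OF q U(1)] U(2) cdf_nonneg[of x] cdf_bounded_prob[of x] by simp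
      qed
    qed
    then have TM: "T M = Tu q N" using H q U N_def by metis
    show "T M = Td d M"
    proof (rule cdf_unique)
      show "real_distribution (T M)" using T_maps M cs_char by auto
      show "real_distribution (Td d M)" using Td_props(1)[OF d M] cs_char by auto
      show "cdf (T M) = cdf (Td d M)"
      proof
        fix x
        have "measure N {v. q v \<le> x} = cdf N (cdf M x)"
          by (rule meas01[OF rdN N01' qmeas qset]) (use cdf_nonneg cdf_bounded_prob in auto)
        then show "cdf (T M) x = cdf (Td d M) x"
          using TM Tu_props(2)[OF q N] Td_props(2)[OF d M] d_def by simp
      qed
    qed
  qed
qed



lemma ret:
  "return borel (c::real) \<in> cs_dists" "cdf (return borel c) x = (if c \<le> x then 1 else 0)"
proof -
  have rd: "real_distribution (return borel c)"
    unfolding real_distribution_def real_distribution_axioms_def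
    by (auto intro: prob_space_return)
  have cd: "cdf (return borel c) x = (if c \<le> x then 1 else 0)" for x
    unfolding cdf_def2 by (simp add: measure_return)
  show "cdf (return borel c) x = (if c \<le> x then 1 else 0)" by (rule cd)
  show "return borel c \<in> cs_dists" using rd cd[of "c - 1"] cd[of c] cs_char by auto
qed

lemma qret: "0 < p \<Longrightarrow> p \<le> 1 \<Longrightarrow> quantile (return borel c) p = c"
  using Q1[OF ret(1), of p c c] Q1[OF ret(1), of p c "quantile (return borel c) p"] ret(2)
  by (auto split: if_splits)

lemma step_rc: "0 < p \<Longrightarrow> p \<le> 1 \<Longrightarrow> rc_distortion (\<lambda>t::real. if p \<le> t then 1 else 0)"
  unfolding rc_distortion_def distortion_def mono_on_def
proof (intro conjI ballI allI impI)
  fix x :: real assume p: "0 < p" "p \<le> 1" and "x \<in> {0..<1}"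
  show "continuous (at_right x) (\<lambda>t::real. if p \<le> t then 1 else 0::real)"
    unfolding continuous_within
  proof -
    have ev: "\<forall>\<^sub>F t in at_right x. (if p \<le> t then 1 else (0::real)) = (if p \<le> x then 1 else 0)"
    proof (cases "p \<le> x")
      case True then show ?thesis by (auto simp: eventually_at_right_field intro!: exI[of _ "x+1"])
    next
      case False then show ?thesis by (auto simp: eventually_at_right_field intro!: exI[of _ p])
    qed
    show "((\<lambda>t::real. if p \<le> t then 1 else 0::real) \<longlongrightarrow> (if p \<le> x then 1 else 0)) (at_right x)"
      by (rule tendsto_eventually[OF ev])
  qed
qed auto

lemma Td_step:
  assumes N: "N \<in> cs_dists" and p: "0 < p" "p \<le> 1"
  shows "Td (\<lambda>t. if p \<le> t then 1 else 0) N = return borel (quantile N p)"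
proof (rule cdf_unique)
  show "real_distribution (Td (\<lambda>t. if p \<le> t then 1 else 0) N)"
    using Td_props(1)[OF step_rc[OF p] N] cs_char by auto
  show "real_distribution (return borel (quantile N p))" using ret(1) cs_char by auto
  show "cdf (Td (\<lambda>t. if p \<le> t then 1 else 0) N) = cdf (return borel (quantile N p))"
    using Td_props(2)[OF step_rc[OF p] N] ret(2) Q1[OF N p] by auto
qed

lemma eq01: "0 \<le> (G::real) \<Longrightarrow> G \<le> 1 \<Longrightarrow> 0 \<le> H \<Longrightarrow> H \<le> 1 \<Longrightarrow>
  (\<And>p. 0 < p \<Longrightarrow> p \<le> 1 \<Longrightarrow> p \<le> G \<longleftrightarrow> p \<le> H) \<Longrightarrow> G = H"
  by (metis linorder_neqE_linordered_idom not_le order.strict_trans1 order_le_less)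

lemma dir_ii:
  assumes T_maps: "\<forall>M\<in>cs_dists. T M \<in> cs_dists"
    and H: "\<forall>d. rc_distortion d \<longrightarrow> (\<forall>M\<in>cs_dists. T (Td d M) = Td d (T M))"
  shows "\<exists>u. incr_left_cont u \<and> (\<forall>M\<in>cs_dists. T M = Tu u M)"
proof -
  define s where "s = (\<lambda>p t::real. if p \<le> t then 1 else (0::real))"
  have key: "T (return borel (quantile M p)) = return borel (quantile (T M) p)"
    if M: "M \<in> cs_dists" and p: "0 < p" "p \<le> 1" for M p
  proof -
    have "T (return borel (quantile M p)) = T (Td (s p) M)" using Td_step[OF M p] s_def by simp
    also have "\<dots> = Td (s p) (T M)" using H step_rc[OF p] M s_def by simp
    also have "\<dots> = return borel (quantile (T M) p)" using Td_step[OF _ p] T_maps M s_def by simp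
    finally show ?thesis .
  qed
  define w where "w = (\<lambda>c. quantile (T (return borel c)) (1/2))"
  have Tret: "T (return borel c) = return borel (w c)" for c
    using key[OF ret(1), of "1/2" c] qret[of "1/2" c] w_def by simp
  have KE: "quantile (T M) p = w (quantile M p)" if M: "M \<in> cs_dists" and p: "0 < p" "p \<le> 1" for M p
  proof -
    have "return borel (quantile (T M) p) = return borel (w (quantile M p))"
      using key[OF M p] Tret[of "quantile M p"] by simp
    then have "quantile (return borel (quantile (T M) p)) (1/2) = quantile (return borel (w (quantile M p))) (1/2)"
      by simp
    then show ?thesis using qret[of "1/2"] by simp
  qed
  have TV: "T (uni a b) \<in> cs_dists" if "a < b" for a b using T_maps uni(1)[OF that] by auto
  have wq: "w (a + p * (b - a)) = quantile (T (uni a b)) p" if "a < b" "0 < p" "p \<le> 1" for a b p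
    using KE[OF uni(1)[OF that(1)] that(2,3)] quni[OF that] by simp
  have wmono: "mono w"
  proof (rule monoI)
    fix x y :: real assume "x \<le> y"
    show "w x \<le> w y"
    proof (cases "x = y")
      case False
      then have xy: "x < y" using \<open>x \<le> y\<close> by simp
      define p where "p = 1 / (y - x + 1)"
      have p: "0 < p" "p \<le> 1" using xy p_def by auto
      have "x - 1 + p * (y - (x - 1)) = x" using xy p_def by (simp add: field_simps)
      then have "w x = quantile (T (uni (x-1) y)) p" using wq[of "x-1" y p] p xy by simp
      also have "\<dots> \<le> quantile (T (uni (x-1) y)) 1" using Qmono[OF TV, of "x-1" y p 1] xy p by simp
      also have "\<dots> = w y" using wq[of "x-1" y 1] xy by simp
      finally show ?thesis .
    qed simp
  qed
  have wlc: "continuous (at_left c) w" for c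
  proof -
    let ?Q = "quantile (T (uni (c-1) c))"
    have lim1: "(?Q \<longlongrightarrow> ?Q 1) (at_left 1)" using Qlc[OF TV, of "c-1" c 1] by simp
    have g: "filterlim (\<lambda>y. y - c + 1) (at_left 1) (at_left c)"
    proof (rule tendsto_imp_filterlim_at_left)
      show "((\<lambda>y. y - c + 1) \<longlongrightarrow> 1) (at_left c)"
        by (rule tendsto_eq_intros tendsto_ident_at tendsto_const | simp)+
      show "\<forall>\<^sub>F x in at_left c. x - c + 1 < 1" by (auto simp: eventually_at_left_field intro!: exI[of _ "c-1"])
    qed
    have lim2: "((\<lambda>y. ?Q (y - c + 1)) \<longlongrightarrow> ?Q 1) (at_left c)"
      using filterlim_compose[OF lim1 g] by simp
    have ev: "eventually (\<lambda>y. ?Q (y - c + 1) = w y) (at_left c)"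
      unfolding eventually_at_left_field
    proof (intro exI[of _ "c-1"] conjI allI impI)
      fix y assume "c - 1 < y" "y < c"
      then show "?Q (y - c + 1) = w y" using wq[of "c-1" c "y - c + 1"] by simp
    qed simp
    have "w c = ?Q 1" using wq[of "c-1" c 1] by simp
    then show ?thesis unfolding continuous_within using iffD1[OF tendsto_cong[OF ev] lim2] by simp
  qed
  have w: "incr_left_cont w" using wmono wlc incr_left_cont_def by auto
  show ?thesis
  proof (intro exI[of _ w] conjI ballI w)
    fix M assume M: "M \<in> cs_dists"
    have rdM: "real_distribution M" using M cs_char by auto
    have TM: "T M \<in> cs_dists" using T_maps M by auto
    have rdTM: "real_distribution (T M)" using TM cs_char by auto
    show "T M = Tu w M"
    proof (rule cdf_unique)
      show "real_distribution (T M)" by fact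
      show "real_distribution (Tu w M)" using Tu_props(1)[OF w M] cs_char by auto
      show "cdf (T M) = cdf (Tu w M)"
      proof
        fix x
        let ?S = "{y. w y \<le> x}"
        have iff: "p \<le> cdf (T M) x \<longleftrightarrow> quantile M p \<in> ?S" if "0 < p" "p \<le> 1" for p
          using Q1[OF TM that, of x] KE[OF M that] by simp
        have iff2: "quantile M p \<in> ?S \<longleftrightarrow> p \<le> measure M ?S" if p: "0 < p" "p \<le> 1" for p
          using sform[OF w, of x]
        proof (elim disjE exE)
          assume "?S = {}" then show ?thesis using measU(1)[OF rdM] p by simp
        next
          assume "?S = UNIV" then show ?thesis using measU(2)[OF rdM] p by simp
        next
          fix a assume "?S = {..a}" then show ?thesis using measU(3)[OF rdM] Q1[OF M p] by simp
        qed
        have "cdf (T M) x = measure M ?S"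
        proof (rule eq01)
          show "0 \<le> cdf (T M) x" "cdf (T M) x \<le> 1"
            using real_distribution.cdf_bounded_prob[OF rdTM]
              finite_borel_measure.cdf_nonneg[OF real_distribution.finite_borel_measure_M[OF rdTM]] by auto
          show "0 \<le> measure M ?S" "measure M ?S \<le> 1"
            using prob_space.prob_le_1[of M] rdM by (auto simp: real_distribution_def)
        qed (use iff iff2 in auto)
        then show "cdf (T M) x = cdf (Tu w M) x" using Tu_props(2)[OF w M] by simp
      qed
    qed
  qed
qed


theorem proposition3:
  fixes T :: "real measure \<Rightarrow> real measure"
  assumes T_maps: "\<forall>M\<in>cs_dists. T M \<in> cs_dists"
  shows "((\<forall>u. incr_left_cont u \<longrightarrow> (\<forall>M\<in>cs_dists. T (Tu u M) = Tu u (T M)))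
           \<longleftrightarrow> (\<exists>d. rc_distortion d \<and> (\<forall>M\<in>cs_dists. T M = Td d M)))
         \<and> ((\<forall>d. rc_distortion d \<longrightarrow> (\<forall>M\<in>cs_dists. T (Td d M) = Td d (T M)))
           \<longleftrightarrow> (\<exists>u. incr_left_cont u \<and> (\<forall>M\<in>cs_dists. T M = Tu u M)))"
proof (intro conjI iffI)
  show "\<exists>d. rc_distortion d \<and> (\<forall>M\<in>cs_dists. T M = Td d M)"
    if "\<forall>u. incr_left_cont u \<longrightarrow> (\<forall>M\<in>cs_dists. T (Tu u M) = Tu u (T M))"
    using dir_i[OF T_maps that] .
  show "\<exists>u. incr_left_cont u \<and> (\<forall>M\<in>cs_dists. T M = Tu u M)"
    if "\<forall>d. rc_distortion d \<longrightarrow> (\<forall>M\<in>cs_dists. T (Td d M) = Td d (T M))"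
    using dir_ii[OF T_maps that] .
next
  assume "\<exists>d. rc_distortion d \<and> (\<forall>M\<in>cs_dists. T M = Td d M)"
  then obtain d where d: "rc_distortion d" and TM: "\<forall>M\<in>cs_dists. T M = Td d M" by blast
  show "\<forall>u. incr_left_cont u \<longrightarrow> (\<forall>M\<in>cs_dists. T (Tu u M) = Tu u (T M))"
  proof (intro allI impI ballI)
    fix u M assume u: "incr_left_cont u" and M: "M \<in> cs_dists"
    have "T (Tu u M) = Td d (Tu u M)" using TM Tu_props(1)[OF u M] by blast
    also have "\<dots> = Tu u (Td d M)" by (rule comm[OF d u M])
    also have "\<dots> = Tu u (T M)" using TM M by simp
    finally show "T (Tu u M) = Tu u (T M)" .
  qed
next
  assume "\<exists>u. incr_left_cont u \<and> (\<forall>M\<in>cs_dists. T M = Tu u M)"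
  then obtain u where u: "incr_left_cont u" and TM: "\<forall>M\<in>cs_dists. T M = Tu u M" by blast
  show "\<forall>d. rc_distortion d \<longrightarrow> (\<forall>M\<in>cs_dists. T (Td d M) = Td d (T M))"
  proof (intro allI impI ballI)
    fix d M assume d: "rc_distortion d" and M: "M \<in> cs_dists"
    have "T (Td d M) = Tu u (Td d M)" using TM Td_props(1)[OF d M] by blast
    also have "\<dots> = Td d (Tu u M)" by (rule comm[OF d u M, symmetric])
    also have "\<dots> = Td d (T M)" using TM M by simp
    finally show "T (Td d M) = Td d (T M)" .
  qed
qed

end
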